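(* Let $h:(\mathbb{R}^n,0)\to(\mathbb{R}^n,0)$ be a bi-Lipschitz homeomorphism germ. Suppose that $h^{-1}(\tau)$ satisfies condition (SSP) for every semiline $\tau$. Then $LD(h(\ell))$ is a semiline for every semiline $\ell$; that is, $h$ satisfies condition semiline-(SSP).
   Context: For a set-germ $A\subset\mathbb{R}^n$ at $0$ with $0\in\overline A$, $D(A)=\{a\in S^{n-1}:\exists\, x_i\in A\setminus\{0\},\ x_i\to0,\ x_i/\|x_i\|\to a\}$ and $LD(A)=\{ta:a\in D(A),t\ge0\}$. A semiline is a set $\{ta:t\ge0\}$ with $a\in S^{n-1}$. For sequences, $\|u_m\|\ll\|v_m\|,\|w_m\|$ means $\|u_m\|/\|v_m\|\to0$ and $\|u_m\|/\|w_m\|\to0$. $A$ satisfies condition (SSP) if for every sequence $a_m\in\mathbb{R}^n$ tending to $0$ with $\lim a_m/\|a_m\|\in D(A)$ there is a sequence $b_m\in A$ with $\|a_m-b_m\|\ll\|a_m\|,\|b_m\|$. A homeomorphism germ $h$ satisfies condition semiline-(SSP) if $D(h(\ell))$ is a single point for every semiline $\ell$. A bi-Lipschitz homeomorphism germ is a homeomorphism germ $h$ with $h(0)=0$ and constants $0<K_1\le K_2$ with $K_1\|x-y\|\le\|h(x)-h(y)\|\le K_2\|x-y\|$ near $0$. *)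

theory Defs
  imports "HOL-Analysis.Analysis"
begin

definition dirs :: "'a::euclidean_space set \<Rightarrow> 'a set" where
  "dirs A = {a. norm a = 1 \<and> (\<exists>x::nat \<Rightarrow> 'a. (\<forall>i. x i \<in> A - {0}) \<and> x \<longlonglongrightarrow> 0
                 \<and> (\<lambda>i. x i /\<^sub>R norm (x i)) \<longlonglongrightarrow> a)}"

definition LD :: "'a::euclidean_space set \<Rightarrow> 'a set" where
  "LD A = {t *\<^sub>R a | t a. a \<in> dirs A \<and> t \<ge> 0}"

definition is_semiline :: "'a::euclidean_space set \<Rightarrow> bool" where
  "is_semiline S \<longleftrightarrow> (\<exists>a. norm a = 1 \<and> S = {t *\<^sub>R a | t. t \<ge> 0})"

definition SSP :: "'a::euclidean_space set \<Rightarrow> bool" where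
  "SSP A \<longleftrightarrow> (\<forall>a::nat \<Rightarrow> 'a. a \<longlonglongrightarrow> 0 \<and> (\<exists>v\<in>dirs A. (\<lambda>m. a m /\<^sub>R norm (a m)) \<longlonglongrightarrow> v)
     \<longrightarrow> (\<exists>b::nat \<Rightarrow> 'a. (\<forall>m. b m \<in> A)
           \<and> (\<lambda>m. norm (a m - b m) / norm (a m)) \<longlonglongrightarrow> 0
           \<and> (\<lambda>m. norm (a m - b m) / norm (b m)) \<longlonglongrightarrow> 0))"

end

theory Submission
  imports Defs "HOL-Homology.Invariance_of_Domain"
begin

lemma norm_dir_ineq:
  fixes u w :: "'a::real_normed_vector"
  assumes "u \<noteq> 0"
  shows "norm (w /\<^sub>R norm w - u /\<^sub>R norm u) \<le> 2 * norm (w - u) / norm u"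
proof (cases "w = 0")
  case True
  then show ?thesis using assms by simp
next
  case False
  have nu: "norm u > 0" using assms by simp
  have nw: "norm w > 0" using False by simp
  have eq: "w /\<^sub>R norm w - u /\<^sub>R norm u
      = (w - u) /\<^sub>R norm u + ((norm u - norm w) / (norm w * norm u)) *\<^sub>R w"
  proof -
    have c: "(norm u - norm w) / (norm w * norm u) = 1 / norm w - 1 / norm u"
      using nu nw by (simp add: field_simps)
    show ?thesis unfolding c
      by (simp add: scaleR_diff_left scaleR_diff_right divide_inverse_commute)
  qed
  have "norm (((norm u - norm w) / (norm w * norm u)) *\<^sub>R w)
        = \<bar>norm u - norm w\<bar> / norm u"
    using nu nw by (simp add: abs_mult)
  also have "\<dots> \<le> norm (w - u) / norm u"
    using nu by (intro divide_right_mono) (metis norm_minus_commute norm_triangle_ineq3, simp)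
  finally have h2: "norm (((norm u - norm w) / (norm w * norm u)) *\<^sub>R w) \<le> norm (w - u) / norm u" .
  have "norm (w /\<^sub>R norm w - u /\<^sub>R norm u)
     \<le> norm ((w - u) /\<^sub>R norm u) + norm (((norm u - norm w) / (norm w * norm u)) *\<^sub>R w)"
    unfolding eq by (rule norm_triangle_ineq)
  also have "norm ((w - u) /\<^sub>R norm u) = norm (w - u) / norm u" by (simp add: divide_inverse_commute)
  finally show ?thesis using h2 by simp
qed

lemma dir_close:
  fixes u w :: "nat \<Rightarrow> 'a::real_normed_vector"
  assumes "\<And>i. u i \<noteq> 0"
    and "(\<lambda>i. norm (w i - u i) / norm (u i)) \<longlonglongrightarrow> 0"
    and "(\<lambda>i. u i /\<^sub>R norm (u i)) \<longlonglongrightarrow> a"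
  shows "(\<lambda>i. w i /\<^sub>R norm (w i)) \<longlonglongrightarrow> a"
proof -
  have "(\<lambda>i. w i /\<^sub>R norm (w i) - u i /\<^sub>R norm (u i)) \<longlonglongrightarrow> 0"
  proof (rule Lim_null_comparison)
    show "\<forall>\<^sub>F i in sequentially. norm (w i /\<^sub>R norm (w i) - u i /\<^sub>R norm (u i))
            \<le> 2 * (norm (w i - u i) / norm (u i))"
      using norm_dir_ineq[OF assms(1)] by simp
    show "(\<lambda>i. 2 * (norm (w i - u i) / norm (u i))) \<longlonglongrightarrow> 0"
      using tendsto_mult_right_zero[OF assms(2)] by simp
  qed
  from tendsto_add[OF this assms(3)] show ?thesis by simp
qed

lemma dirsI_ev:
  fixes x :: "nat \<Rightarrow> 'a::euclidean_space"
  assumes "eventually (\<lambda>i. x i \<in> A - {0}) sequentially"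
    and "x \<longlonglongrightarrow> 0" and "(\<lambda>i. x i /\<^sub>R norm (x i)) \<longlonglongrightarrow> a" and "norm a = 1"
  shows "a \<in> dirs A"
proof -
  obtain N where N: "\<And>i. i \<ge> N \<Longrightarrow> x i \<in> A - {0}"
    using assms(1) unfolding eventually_sequentially by blast
  show ?thesis
    unfolding dirs_def
    apply (rule CollectI, rule conjI[OF assms(4)])
    apply (rule exI[of _ "\<lambda>i. x (i + N)"])
    using N LIMSEQ_ignore_initial_segment[OF assms(2), of N]
      LIMSEQ_ignore_initial_segment[OF assms(3), of N] by auto
qed

theorem proposition2p20:
  fixes h :: "'a::euclidean_space \<Rightarrow> 'a" and r K1 K2 :: real
  assumes "r > 0" and "h 0 = 0"
    and "0 < K1" and "K1 \<le> K2"
    and "\<And>x y. x \<in> ball 0 r \<Longrightarrow> y \<in> ball 0 r \<Longrightarrow>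
            K1 * norm (x - y) \<le> norm (h x - h y) \<and> norm (h x - h y) \<le> K2 * norm (x - y)"
    and "\<And>\<tau>. is_semiline \<tau> \<Longrightarrow> SSP {x \<in> ball 0 r. h x \<in> \<tau>}"
  shows "\<forall>l. is_semiline l \<longrightarrow>
           is_semiline (LD (h ` (l \<inter> ball 0 r))) \<and> (\<exists>p. dirs (h ` (l \<inter> ball 0 r)) = {p})"
proof (intro allI impI)
  note r = assms(1) and h0 = assms(2) and K1 = assms(3) and K12 = assms(4)
    and lip = assms(5) and ssp = assms(6)
  define B where "B = ball (0::'a) r"
  have K2: "K2 > 0" using K1 K12 by simp
  have low: "K1 * norm x \<le> norm (h x)" if "x \<in> B" for x
    using lip[of x 0] that r h0 by (simp add: B_def)
  have up: "norm (h x) \<le> K2 * norm x" if "x \<in> B" for x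
    using lip[of x 0] that r h0 by (simp add: B_def)
  have hnz: "h x \<noteq> 0" if "x \<in> B" "x \<noteq> 0" for x
  proof -
    have "0 < K1 * norm x" using K1 that by simp
    then show ?thesis using low[OF that(1)] by auto
  qed
  have "lipschitz_on K2 B h"
    unfolding lipschitz_on_def using K2 lip by (auto simp: B_def dist_norm)
  then have cont: "continuous_on B h" by (rule lipschitz_on_continuous_on)
  have inj: "inj_on h B"
  proof (rule inj_onI)
    fix x y assume "x \<in> B" "y \<in> B" "h x = h y"
    then have "K1 * norm (x - y) \<le> 0" using lip[of x y] by (simp add: B_def)
    then show "x = y" using K1 by (simp add: mult_le_0_iff)
  qed
  have "open (h ` B)" using invariance_of_domain[OF cont _ inj] by (simp add: B_def)
  moreover have "0 \<in> h ` B" using r h0 unfolding B_def by (metis centre_in_ball image_eqI)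
  ultimately obtain \<epsilon> where eps: "\<epsilon> > 0" "ball 0 \<epsilon> \<subseteq> h ` B"
    using open_contains_ball by blast

  fix l :: "'a set"
  assume "is_semiline l"
  then obtain a where a1: "norm a = 1" and l: "l = {t *\<^sub>R a | t. t \<ge> 0}"
    unfolding is_semiline_def by blast
  define A where "A = h ` (l \<inter> B)"
  have preim: "\<exists>u. u \<in> B \<and> u \<noteq> 0 \<and> h u = y \<and> u /\<^sub>R norm u = a" if "y \<in> A - {0}" for y
  proof -
    from that obtain t where t: "t \<ge> 0" "t *\<^sub>R a \<in> B" "y = h (t *\<^sub>R a)"
      unfolding A_def l by blast
    have "t \<noteq> 0" using t that h0 by auto
    then have "t > 0" using t by simp
    then have "(t *\<^sub>R a) /\<^sub>R norm (t *\<^sub>R a) = a" using a1 by simp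
    moreover have "t *\<^sub>R a \<noteq> 0" using \<open>t > 0\<close> a1 by auto
    ultimately show ?thesis using t by blast
  qed
  have seqpre: "\<exists>u. (\<forall>i. u i \<in> B \<and> u i \<noteq> 0 \<and> h (u i) = y i \<and> u i /\<^sub>R norm (u i) = a)
       \<and> u \<longlonglongrightarrow> 0"
    if "\<forall>i. y i \<in> A - {0}" "y \<longlonglongrightarrow> 0" for y
  proof -
    have "\<forall>i. \<exists>v. v \<in> B \<and> v \<noteq> 0 \<and> h v = y i \<and> v /\<^sub>R norm v = a"
      using that(1) preim by blast
    then obtain u where u: "\<forall>i. u i \<in> B \<and> u i \<noteq> 0 \<and> h (u i) = y i \<and> u i /\<^sub>R norm (u i) = a"
      by (rule choice[THEN exE]) blast
    have "u \<longlonglongrightarrow> 0"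
    proof (rule Lim_null_comparison)
      show "\<forall>\<^sub>F i in sequentially. norm (u i) \<le> norm (y i) / K1"
      proof (rule always_eventually, rule allI)
        fix i
        have "K1 * norm (u i) \<le> norm (y i)" using u low by metis
        then show "norm (u i) \<le> norm (y i) / K1" using K1 by (simp add: field_simps mult.commute)
      qed
      show "(\<lambda>i. norm (y i) / K1) \<longlonglongrightarrow> 0"
        using tendsto_divide[OF tendsto_norm_zero[OF that(2)] tendsto_const, of K1] K1 by simp
    qed
    then show ?thesis using u by blast
  qed

  have uniq: "q = p" if p: "p \<in> dirs A" and q: "q \<in> dirs A" for p q
  proof -
    from p obtain y where y: "\<forall>i. y i \<in> A - {0}" "y \<longlonglongrightarrow> 0"
        "(\<lambda>i. y i /\<^sub>R norm (y i)) \<longlonglongrightarrow> p" and p1: "norm p = 1"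
      unfolding dirs_def by blast
    from seqpre[OF y(1,2)] obtain u where
      u: "\<forall>i. u i \<in> B \<and> u i \<noteq> 0 \<and> h (u i) = y i \<and> u i /\<^sub>R norm (u i) = a" "u \<longlonglongrightarrow> 0"
      by blast
    define \<tau> where "\<tau> = {t *\<^sub>R p | t. t \<ge> (0::real)}"
    have semi: "is_semiline \<tau>" unfolding is_semiline_def \<tau>_def using p1 by blast
    define P where "P = {x \<in> ball 0 r. h x \<in> \<tau>}"
    have sspP: "SSP P" unfolding P_def using ssp[OF semi] .
    define z where "z i = norm (y i) *\<^sub>R p" for i
    define w where "w i = inv_into B h (z i)" for i
    have ev: "\<forall>\<^sub>F i in sequentially. norm (y i) < \<epsilon>"
      using y(2) eps(1) by (auto simp: tendsto_iff dist_norm)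
    have wprop: "\<forall>\<^sub>F i in sequentially. w i \<in> B \<and> h (w i) = z i"
      using ev
    proof (rule eventually_mono)
      fix i assume "norm (y i) < \<epsilon>"
      then have "z i \<in> ball 0 \<epsilon>" using p1 by (simp add: z_def)
      then have "z i \<in> h ` B" using eps by blast
      then show "w i \<in> B \<and> h (w i) = z i"
        unfolding w_def by (simp add: inv_into_into f_inv_into_f)
    qed
    have ynz: "y i \<noteq> 0" for i using y(1) by auto
    have a_in: "a \<in> dirs P"
    proof (rule dirsI_ev)
      show "\<forall>\<^sub>F i in sequentially. w i \<in> P - {0}"
        using wprop
      proof (rule eventually_mono)
        fix i assume "w i \<in> B \<and> h (w i) = z i"
        moreover have "z i \<in> \<tau>" unfolding z_def \<tau>_def by auto
        moreover have "z i \<noteq> 0" using ynz p1 by (auto simp: z_def)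
        ultimately show "w i \<in> P - {0}" unfolding P_def B_def using h0 by auto
      qed
      have wu: "\<forall>\<^sub>F i in sequentially. norm (w i - u i) \<le> norm (z i - y i) / K1"
        using wprop
      proof (rule eventually_mono)
        fix i assume "w i \<in> B \<and> h (w i) = z i"
        then have "K1 * norm (w i - u i) \<le> norm (z i - y i)"
          using lip[of "w i" "u i"] u(1) by (auto simp: B_def)
        then show "norm (w i - u i) \<le> norm (z i - y i) / K1" using K1 by (simp add: field_simps mult.commute)
      qed
      have zy: "norm (z i - y i) = norm (y i) * norm (p - y i /\<^sub>R norm (y i))" for i
      proof -
        have "z i - y i = norm (y i) *\<^sub>R (p - y i /\<^sub>R norm (y i))"
          using ynz by (simp add: z_def scaleR_diff_right)
        then show ?thesis by simp
      qed
      have dp: "(\<lambda>i. norm (p - y i /\<^sub>R norm (y i))) \<longlonglongrightarrow> 0"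
        using tendsto_norm_zero[OF LIM_zero[OF y(3)]] by (simp add: norm_minus_commute)
      show "w \<longlonglongrightarrow> 0"
      proof (rule Lim_null_comparison)
        show "\<forall>\<^sub>F i in sequentially. norm (w i) \<le> norm (y i) / K1"
          using wprop
        proof (rule eventually_mono)
          fix i assume "w i \<in> B \<and> h (w i) = z i"
          then have "K1 * norm (w i) \<le> norm (z i)" using low by metis
          then show "norm (w i) \<le> norm (y i) / K1" using K1 p1 by (simp add: z_def field_simps mult.commute)
        qed
        show "(\<lambda>i. norm (y i) / K1) \<longlonglongrightarrow> 0"
          using tendsto_divide[OF tendsto_norm_zero[OF y(2)] tendsto_const, of K1] K1 by simp
      qed
      show "(\<lambda>i. w i /\<^sub>R norm (w i)) \<longlonglongrightarrow> a"
      proof (rule dir_close[of u])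
        show "u i \<noteq> 0" for i using u(1) by blast
        show "(\<lambda>i. u i /\<^sub>R norm (u i)) \<longlonglongrightarrow> a" using u(1) by simp
        show "(\<lambda>i. norm (w i - u i) / norm (u i)) \<longlonglongrightarrow> 0"
        proof (rule Lim_null_comparison)
          show "\<forall>\<^sub>F i in sequentially. norm (norm (w i - u i) / norm (u i))
                 \<le> (K2 / K1) * norm (p - y i /\<^sub>R norm (y i))"
            using wu
          proof (rule eventually_mono)
            fix i assume H: "norm (w i - u i) \<le> norm (z i - y i) / K1"
            have ui: "u i \<in> B" "u i \<noteq> 0" "h (u i) = y i" using u(1) by auto
            have nu: "norm (u i) > 0" using ui by simp
            have yu: "norm (y i) \<le> K2 * norm (u i)" using up[OF ui(1)] ui by simp
            have "norm (w i - u i) \<le> norm (y i) * norm (p - y i /\<^sub>R norm (y i)) / K1"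
              using H zy by simp
            also have "\<dots> \<le> K2 * norm (u i) * norm (p - y i /\<^sub>R norm (y i)) / K1"
              using yu K1 by (intro divide_right_mono mult_right_mono) auto
            finally have "norm (w i - u i) \<le> K2 * norm (u i) * norm (p - y i /\<^sub>R norm (y i)) / K1" .
            then show "norm (norm (w i - u i) / norm (u i)) \<le> (K2 / K1) * norm (p - y i /\<^sub>R norm (y i))"
              using nu K1 by (simp add: field_simps)
          qed
          show "(\<lambda>i. (K2 / K1) * norm (p - y i /\<^sub>R norm (y i))) \<longlonglongrightarrow> 0"
            using tendsto_mult_right_zero[OF dp, of "K2 / K1"] .
        qed
      qed
      show "norm a = 1" by (rule a1)
    qed
    from q obtain y' where y': "\<forall>i. y' i \<in> A - {0}" "y' \<longlonglongrightarrow> 0"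
        "(\<lambda>i. y' i /\<^sub>R norm (y' i)) \<longlonglongrightarrow> q" and q1: "norm q = 1"
      unfolding dirs_def by blast
    from seqpre[OF y'(1,2)] obtain u' where
      u': "\<forall>i. u' i \<in> B \<and> u' i \<noteq> 0 \<and> h (u' i) = y' i \<and> u' i /\<^sub>R norm (u' i) = a" "u' \<longlonglongrightarrow> 0"
      by blast
    have "(\<lambda>m. u' m /\<^sub>R norm (u' m)) \<longlonglongrightarrow> a" using u'(1) by simp
    with u'(2) a_in sspP obtain b where b: "\<forall>m. b m \<in> P"
        "(\<lambda>m. norm (u' m - b m) / norm (u' m)) \<longlonglongrightarrow> 0"
      unfolding SSP_def by blast
    have y'nz: "y' i \<noteq> 0" for i using y'(1) by auto
    have rat: "(\<lambda>i. norm (h (b i) - y' i) / norm (y' i)) \<longlonglongrightarrow> 0"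
    proof (rule Lim_null_comparison)
      show "\<forall>\<^sub>F i in sequentially. norm (norm (h (b i) - y' i) / norm (y' i))
             \<le> (K2 / K1) * (norm (u' i - b i) / norm (u' i))"
      proof (rule always_eventually, rule allI)
        fix i
        have ui: "u' i \<in> B" "u' i \<noteq> 0" "h (u' i) = y' i" using u'(1) by auto
        have bi: "b i \<in> B" using b(1) by (auto simp: P_def B_def)
        have nu: "norm (u' i) > 0" using ui by simp
        have l1: "K1 * norm (u' i) \<le> norm (y' i)" using low[OF ui(1)] ui by simp
        have l2: "norm (h (b i) - y' i) \<le> K2 * norm (u' i - b i)"
          using lip[of "u' i" "b i"] ui bi by (auto simp: B_def norm_minus_commute)
        have "norm (h (b i) - y' i) / norm (y' i) \<le> K2 * norm (u' i - b i) / (K1 * norm (u' i))"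
          using l1 l2 nu K1 K2 by (intro frac_le) auto
        then show "norm (norm (h (b i) - y' i) / norm (y' i)) \<le> (K2 / K1) * (norm (u' i - b i) / norm (u' i))"
          by simp
      qed
      show "(\<lambda>i. (K2 / K1) * (norm (u' i - b i) / norm (u' i))) \<longlonglongrightarrow> 0"
        using tendsto_mult_right_zero[OF b(2), of "K2 / K1"] .
    qed
    have conv: "(\<lambda>i. h (b i) /\<^sub>R norm (h (b i))) \<longlonglongrightarrow> q"
      by (rule dir_close[OF y'nz rat y'(3)])
    have "\<forall>\<^sub>F i in sequentially. norm (h (b i) - y' i) / norm (y' i) < 1"
      using rat by (auto simp: tendsto_iff dist_norm)
    then have "\<forall>\<^sub>F i in sequentially. h (b i) /\<^sub>R norm (h (b i)) = p"
    proof (rule eventually_mono)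
      fix i assume H: "norm (h (b i) - y' i) / norm (y' i) < 1"
      have "h (b i) \<noteq> 0"
      proof
        assume "h (b i) = 0"
        then show False using H y'nz[of i] by simp
      qed
      moreover obtain t where "t \<ge> 0" "h (b i) = t *\<^sub>R p"
        using b(1) unfolding P_def \<tau>_def by blast
      ultimately show "h (b i) /\<^sub>R norm (h (b i)) = p" using p1 by auto
    qed
    then have "(\<lambda>i. h (b i) /\<^sub>R norm (h (b i))) \<longlonglongrightarrow> p"
      by (rule tendsto_eventually)
    with conv show "q = p" using LIMSEQ_unique by blast
  qed

  obtain p where pA: "p \<in> dirs A"
  proof -
    define x where "x k = (r / real (k + 2)) *\<^sub>R a" for k
    have xB: "x k \<in> l \<inter> B" for k
    proof -
      have "r / real (k + 2) < r" using r by (simp add: divide_less_eq)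
      moreover have "r / real (k+2) \<ge> 0" using r by simp
      ultimately show ?thesis using a1 r unfolding x_def l B_def by auto
    qed
    have xnz: "x k \<noteq> 0" for k using r a1 by (auto simp: x_def)
    have c0: "(\<lambda>k. r / real (k + 2)) \<longlonglongrightarrow> 0"
      using LIMSEQ_ignore_initial_segment[OF lim_const_over_n[of r], of 2] by simp
    have hx0: "(\<lambda>k. h (x k)) \<longlonglongrightarrow> 0"
    proof (rule Lim_null_comparison)
      show "\<forall>\<^sub>F k in sequentially. norm (h (x k)) \<le> K2 * (r / real (k + 2))"
      proof (rule always_eventually, rule allI)
        fix k
        have "norm (h (x k)) \<le> K2 * norm (x k)" using up xB by blast
        moreover have "norm (x k) = r / real (k + 2)" using a1 r by (simp add: x_def)
        ultimately show "norm (h (x k)) \<le> K2 * (r / real (k + 2))" by simp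
      qed
      show "(\<lambda>k. K2 * (r / real (k + 2))) \<longlonglongrightarrow> 0"
        using tendsto_mult_right_zero[OF c0, of K2] .
    qed
    have hxnz: "h (x k) \<noteq> 0" for k using hnz xB xnz by auto
    have "compact (sphere (0::'a) 1)" by simp
    moreover have "\<forall>k. h (x k) /\<^sub>R norm (h (x k)) \<in> sphere 0 1" using hxnz by simp
    ultimately obtain p \<sigma> where p: "p \<in> sphere 0 1" "strict_mono \<sigma>"
        "((\<lambda>k. h (x k) /\<^sub>R norm (h (x k))) \<circ> \<sigma>) \<longlonglongrightarrow> p"
      unfolding compact_eq_seq_compact_metric seq_compact_def by meson
    have "p \<in> dirs A"
      unfolding dirs_def
    proof (intro CollectI conjI exI[of _ "\<lambda>k. h (x (\<sigma> k))"])
      show "norm p = 1" using p(1) by simp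
      show "\<forall>i. h (x (\<sigma> i)) \<in> A - {0}" using xB hxnz by (auto simp: A_def)
      show "(\<lambda>i. h (x (\<sigma> i))) \<longlonglongrightarrow> 0"
        using LIMSEQ_subseq_LIMSEQ[OF hx0 p(2)] by (simp add: o_def)
      show "(\<lambda>i. h (x (\<sigma> i)) /\<^sub>R norm (h (x (\<sigma> i)))) \<longlonglongrightarrow> p"
        using p(3) by (simp add: o_def)
    qed
    then show ?thesis using that by blast
  qed
  have dA: "dirs A = {p}" using pA uniq by blast
  have "LD A = {t *\<^sub>R p | t. t \<ge> 0}" unfolding LD_def dA by blast
  moreover have "norm p = 1" using pA unfolding dirs_def by blast
  ultimately have "is_semiline (LD A)" unfolding is_semiline_def by blast
  then show "is_semiline (LD (h ` (l \<inter> ball 0 r))) \<and> (\<exists>p. dirs (h ` (l \<inter> ball 0 r)) = {p})"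
    using dA unfolding A_def B_def by blast
qed

end
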